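(* Let $S=(X,\prec,\sqsubset)$ be a finite so-structure. Then: (1) for all $\alpha,\beta\in X$: $\alpha\in[\beta]$ if and only if for every $\lhd\in ext(S)$, either $\alpha=\beta$ or $\alpha\frown_\lhd\beta$; (2) there exists $\lhd\in ext(S)$ such that $\Omega_\lhd=[\gamma_1]\dots[\gamma_k]$ for some $\gamma_1,\dots,\gamma_k\in X$, i.e. every step of $\Omega_\lhd$ is a $\equiv_\sqsubset$-equivalence class; (3) if $[\alpha]\,(\hat\sqsubset)^{\mathrm{cov}}\,[\beta]$, then there exists $\lhd\in ext(S)$ with $\Omega_\lhd=[\delta_1]\dots[\delta_m]$ for some $\delta_1,\dots,\delta_m\in X$, and some $1\le i<m$ with $\alpha\in[\delta_i]$ and $\beta\in[\delta_{i+1}]$.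
   Context: A stratified order structure (so-structure) is a triple $S=(X,\prec,\sqsubset)$ with $\prec,\sqsubset\subseteq X\times X$ such that for all $\alpha,\beta,\gamma\in X$: (S1) $\neg(\alpha\sqsubset\alpha)$; (S2) $\alpha\prec\beta\Rightarrow\alpha\sqsubset\beta$; (S3) $\alpha\sqsubset\beta\sqsubset\gamma\wedge\alpha\neq\gamma\Rightarrow\alpha\sqsubset\gamma$; (S4) $(\alpha\sqsubset\beta\wedge\beta\prec\gamma)\vee(\alpha\prec\beta\wedge\beta\sqsubset\gamma)\Rightarrow\alpha\prec\gamma$. For a relation $\lhd$ on $X$: $\alpha\frown_\lhd\beta$ iff $\alpha\neq\beta$, $\neg(\alpha\lhd\beta)$ and $\neg(\beta\lhd\alpha)$; $\lhd^\frown:=\lhd\cup\frown_\lhd$. A partial order $\lhd$ is stratified if $\frown_\lhd\cup\mathrm{id}_X$ is an equivalence relation. For a stratified order $\lhd$ on a finite set $X$, $\Omega_\lhd=B_1\dots B_k$ denotes the unique sequence of nonempty pairwise disjoint sets with union $X$ such that $\lhd=\bigcup_{i<j}B_i\times B_j$. A stratified extension of $S$ is a stratified order $\lhd$ on $X$ with $\prec\subseteq\lhd$ and $\sqsubset\subseteq\lhd^\frown$; $ext(S)$ is the set of all stratified extensions of $S$. Define $\alpha\equiv_\sqsubset\beta$ iff $\alpha=\beta$ or ($\alpha\sqsubset\beta$ and $\beta\sqsubset\alpha$); $[\alpha]$ is the equivalence class of $\alpha$. On the classes, $[\alpha]\,\hat\sqsubset\,[\beta]$ iff $[\alpha]\neq[\beta]$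 and $([\alpha]\times[\beta])\cap\sqsubset\neq\emptyset$. For a relation $R$, its covering relation is $R^{\mathrm{cov}}:=\{(x,y): xRy\wedge\neg\exists z\,(xRz\wedge zRy)\}$. *)

theory Defs
  imports Main
begin

definition so_structure :: "'a set \<Rightarrow> 'a rel \<Rightarrow> 'a rel \<Rightarrow> bool" where
  "so_structure X prec sq \<longleftrightarrow>
     prec \<subseteq> X \<times> X \<and> sq \<subseteq> X \<times> X \<and>
     (\<forall>a\<in>X. (a, a) \<notin> sq) \<and>
     (\<forall>a\<in>X. \<forall>b\<in>X. (a, b) \<in> prec \<longrightarrow> (a, b) \<in> sq) \<and>
     (\<forall>a\<in>X. \<forall>b\<in>X. \<forall>c\<in>X. (a, b) \<in> sq \<and> (b, c) \<in> sq \<and> a \<noteq> c \<longrightarrow> (a, c) \<in> sq) \<and>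
     (\<forall>a\<in>X. \<forall>b\<in>X. \<forall>c\<in>X.
        ((a, b) \<in> sq \<and> (b, c) \<in> prec) \<or> ((a, b) \<in> prec \<and> (b, c) \<in> sq) \<longrightarrow> (a, c) \<in> prec)"

definition frown :: "'a set \<Rightarrow> 'a rel \<Rightarrow> 'a rel" where
  "frown X R = {(a, b). a \<in> X \<and> b \<in> X \<and> a \<noteq> b \<and> (a, b) \<notin> R \<and> (b, a) \<notin> R}"

definition partial_order_on_X :: "'a set \<Rightarrow> 'a rel \<Rightarrow> bool" where
  "partial_order_on_X X R \<longleftrightarrow> R \<subseteq> X \<times> X \<and> irrefl R \<and> trans R"

definition stratified_order :: "'a set \<Rightarrow> 'a rel \<Rightarrow> bool" where
  "stratified_order X R \<longleftrightarrow> partial_order_on_X X R \<and> equiv X (frown X R \<union> Id_on X)"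

definition ext :: "'a set \<Rightarrow> 'a rel \<Rightarrow> 'a rel \<Rightarrow> 'a rel set" where
  "ext X prec sq = {R. stratified_order X R \<and> prec \<subseteq> R \<and> sq \<subseteq> R \<union> frown X R}"

text \<open>step_seq X R Bs: Bs is the step sequence \<Omega>_R of R
  (nonempty, pairwise disjoint steps covering X, with R = union of B_i x B_j for i < j).\<close>
definition step_seq :: "'a set \<Rightarrow> 'a rel \<Rightarrow> 'a set list \<Rightarrow> bool" where
  "step_seq X R Bs \<longleftrightarrow>
     (\<forall>i < length Bs. Bs ! i \<noteq> {}) \<and>
     (\<forall>i < length Bs. \<forall>j < length Bs. i \<noteq> j \<longrightarrow> Bs ! i \<inter> Bs ! j = {}) \<and>
     \<Union>(set Bs) = X \<and>
     R = (\<Union>i < length Bs. \<Union>j \<in> {i<..<length Bs}. Bs ! i \<times> Bs ! j)"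

definition sq_class :: "'a set \<Rightarrow> 'a rel \<Rightarrow> 'a \<Rightarrow> 'a set" where
  "sq_class X sq a = {b \<in> X. b = a \<or> ((a, b) \<in> sq \<and> (b, a) \<in> sq)}"

definition hat_sq :: "'a set \<Rightarrow> 'a rel \<Rightarrow> 'a set rel" where
  "hat_sq X sq = {(sq_class X sq a, sq_class X sq b) | a b. a \<in> X \<and> b \<in> X \<and>
      sq_class X sq a \<noteq> sq_class X sq b \<and>
      (sq_class X sq a \<times> sq_class X sq b) \<inter> sq \<noteq> {}}"

definition cov :: "'b rel \<Rightarrow> 'b rel" where
  "cov R = {(x, y). (x, y) \<in> R \<and> \<not> (\<exists>z. (x, z) \<in> R \<and> (z, y) \<in> R)}"

end

theory Submission
  imports Defs
begin

lemma topo: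
  assumes "finite A" "irrefl P" "trans P"
  shows "\<exists>L. set L = A \<and> distinct L \<and> sorted_wrt (\<lambda>x y. (y,x) \<notin> P) L"
proof -
  define rk where "rk c = card {e\<in>A. (e,c)\<in>P}" for c
  have rk_lt: "rk d < rk c" if "(d,c) \<in> P" "d \<in> A" for c d
  proof -
    have "{e\<in>A. (e,d)\<in>P} \<subset> {e\<in>A. (e,c)\<in>P}"
      using that assms(2,3) unfolding irrefl_def trans_def by blast
    then show ?thesis unfolding rk_def by (simp add: assms(1) psubset_card_mono)
  qed
  obtain L0 where L0: "set L0 = A" "distinct L0" using finite_distinct_list[OF assms(1)] by blast
  define L where "L = sort_key rk L0"
  have "sorted (map rk L)" unfolding L_def by (rule sorted_sort_key)
  then have "sorted_wrt (\<lambda>x y. rk x \<le> rk y) L" by (simp add: sorted_wrt_map)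
  moreover have "set L = A" "distinct L" using L0 by (auto simp: L_def)
  ultimately show ?thesis
    by (intro exI[of _ L]) (auto elim!: sorted_wrt_mono_rel[rotated] dest: rk_lt)
qed

locale sos =
  fixes X :: "'a set" and prec sq :: "'a rel"
  assumes fin: "finite X" and so: "so_structure X prec sq"
begin

abbreviation "cls \<equiv> sq_class X sq"
abbreviation "H \<equiv> hat_sq X sq"

lemma precX: "prec \<subseteq> X \<times> X" and sqX: "sq \<subseteq> X \<times> X"
  using so unfolding so_structure_def by auto

lemma irr: "(a,a) \<notin> sq" using so sqX unfolding so_structure_def by auto
lemma S2: "(a,b) \<in> prec \<Longrightarrow> (a,b) \<in> sq" using so precX unfolding so_structure_def by blast
lemma S3: "(a,b) \<in> sq \<Longrightarrow> (b,c) \<in> sq \<Longrightarrow> a \<noteq> c \<Longrightarrow> (a,c) \<in> sq"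
  using so sqX unfolding so_structure_def by blast
lemma S4a: "(a,b) \<in> sq \<Longrightarrow> (b,c) \<in> prec \<Longrightarrow> (a,c) \<in> prec"
  using so sqX precX unfolding so_structure_def by blast

lemma cls_sub: "cls a \<subseteq> X" unfolding sq_class_def by auto
lemma cls_self: "a \<in> X \<Longrightarrow> a \<in> cls a" unfolding sq_class_def by auto
lemma cls_mem: assumes "x \<in> cls a" "a \<in> X" shows "cls x = cls a"
proof -
  have x: "x \<in> X" "x = a \<or> (a,x) \<in> sq \<and> (x,a) \<in> sq" using assms unfolding sq_class_def by auto
  show ?thesis
  proof (cases "x = a")
    case False
    then have xa: "(a,x) \<in> sq" "(x,a) \<in> sq" using x by auto
    show ?thesis unfolding sq_class_def
    proof (intro Collect_cong conj_cong refl)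
      fix b assume "b \<in> X"
      show "(b = x \<or> (x, b) \<in> sq \<and> (b, x) \<in> sq) = (b = a \<or> (a, b) \<in> sq \<and> (b, a) \<in> sq)"
        using xa S3[of a x b] S3[of b x a] S3[of x a b] S3[of b a x] irr False by metis
    qed
  qed simp
qed

lemma hat_iff: assumes "a \<in> X" "b \<in> X"
  shows "(cls a, cls b) \<in> H \<longleftrightarrow> cls a \<noteq> cls b \<and> (a,b) \<in> sq"
proof
  assume "(cls a, cls b) \<in> H"
  then obtain a0 b0 where h: "a0 \<in> X" "b0 \<in> X" "cls a = cls a0" "cls b = cls b0" "cls a0 \<noteq> cls b0"
    "(cls a0 \<times> cls b0) \<inter> sq \<noteq> {}" unfolding hat_sq_def by auto
  then obtain a' b' where ab: "a' \<in> cls a" "b' \<in> cls b" "(a',b') \<in> sq" by auto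
  have ne: "cls a \<noteq> cls b" using h by simp
  have a'X: "a' \<in> X" "b' \<in> X" using ab cls_sub by auto
  have ca': "cls a' = cls a" "cls b' = cls b" using ab assms cls_mem by auto
  have "(a,b') \<in> sq"
  proof (cases "a' = a")
    case True then show ?thesis using ab by simp
  next
    case False
    then have "(a,a') \<in> sq" using ab(1) unfolding sq_class_def by auto
    moreover have "a \<noteq> b'" using ne ca' by auto
    ultimately show ?thesis using S3 ab by blast
  qed
  moreover have "(a,b) \<in> sq"
  proof (cases "b' = b")
    case True then show ?thesis using \<open>(a,b') \<in> sq\<close> by simp
  next
    case False
    then have "(b',b) \<in> sq" using ab(2) unfolding sq_class_def by auto
    moreover have "a \<noteq> b" using ne by auto
    ultimately show ?thesis using S3 \<open>(a,b') \<in> sq\<close> by blast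
  qed
  ultimately show "cls a \<noteq> cls b \<and> (a,b) \<in> sq" using ne by simp
next
  assume "cls a \<noteq> cls b \<and> (a,b) \<in> sq"
  then show "(cls a, cls b) \<in> H" using assms cls_self unfolding hat_sq_def by blast
qed

lemma hat_dom: "(C,D) \<in> H \<Longrightarrow> \<exists>a\<in>X. \<exists>b\<in>X. C = cls a \<and> D = cls b"
  unfolding hat_sq_def by auto

lemma hat_irrefl: "irrefl H" unfolding irrefl_def hat_sq_def by auto

lemma hat_trans: "trans H"
proof (rule transI)
  fix C D E assume 1: "(C,D) \<in> H" and 2: "(D,E) \<in> H"
  obtain a b where ab: "a \<in> X" "b \<in> X" "C = cls a" "D = cls b" using hat_dom[OF 1] by auto
  obtain c where c: "c \<in> X" "E = cls c" using hat_dom[OF 2] by auto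
  have h1: "cls a \<noteq> cls b" "(a,b) \<in> sq" using 1 ab hat_iff by auto
  have h2: "cls b \<noteq> cls c" "(b,c) \<in> sq" using 2 ab c hat_iff by auto
  have "a \<noteq> c"
  proof
    assume "a = c"
    then have "b \<in> cls a" using h1 h2 ab unfolding sq_class_def by auto
    then show False using cls_mem h1 ab by auto
  qed
  then have ac: "(a,c) \<in> sq" using S3 h1 h2 by blast
  have "cls a \<noteq> cls c"
  proof
    assume "cls a = cls c"
    then have "c \<in> cls a" using c cls_self by auto
    then have "(c,a) \<in> sq" using \<open>a \<noteq> c\<close> unfolding sq_class_def by auto
    then have "(b,a) \<in> sq" using S3 h2 h1 by (metis irr)
    then have "b \<in> cls a" using h1 ab unfolding sq_class_def by auto
    then show False using cls_mem h1 ab by auto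
  qed
  then show "(C,E) \<in> H" using ac hat_iff ab c by auto
qed

lemma prec_neq: assumes "(a,b) \<in> prec" shows "cls a \<noteq> cls b"
proof
  assume e: "cls a = cls b"
  have X: "a \<in> X" "b \<in> X" using assms precX by auto
  then have "a \<in> cls b" using e cls_self by auto
  then have "a = b \<or> (a,b) \<in> sq \<and> (b,a) \<in> sq" unfolding sq_class_def by auto
  then show False using assms S2 irr S4a by metis
qed

definition Rof :: "'a set list \<Rightarrow> 'a rel" where
  "Rof L = (\<Union>i < length L. \<Union>j \<in> {i<..<length L}. L ! i \<times> L ! j)"

definition good :: "'a set list \<Rightarrow> bool" where
  "good L \<longleftrightarrow> set L = cls ` X \<and> distinct L \<and> sorted_wrt (\<lambda>C D. (D,C) \<notin> H) L"

lemma cls_of_elem: assumes "C \<in> cls ` X" "x \<in> C" shows "x \<in> X" "C = cls x"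
  using assms cls_sub cls_mem by auto

lemma memR: assumes "good L"
  shows "(x,y) \<in> Rof L \<longleftrightarrow> x \<in> X \<and> y \<in> X \<and>
     (\<exists>i j. i < j \<and> j < length L \<and> L!i = cls x \<and> L!j = cls y)"
proof
  assume "(x,y) \<in> Rof L"
  then obtain i j where ij: "i < j" "j < length L" "x \<in> L!i" "y \<in> L!j" unfolding Rof_def by auto
  have "L!i \<in> cls ` X" "L!j \<in> cls ` X" using ij assms unfolding good_def
    by (metis nth_mem order.strict_trans)+
  then show "x \<in> X \<and> y \<in> X \<and> (\<exists>i j. i < j \<and> j < length L \<and> L!i = cls x \<and> L!j = cls y)"
    using ij cls_of_elem by metis
next
  assume "x \<in> X \<and> y \<in> X \<and> (\<exists>i j. i < j \<and> j < length L \<and> L!i = cls x \<and> L!j = cls y)"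
  then obtain i j where "x \<in> X" "y \<in> X" "i < j" "j < length L" "L!i = cls x" "L!j = cls y" by blast
  then show "(x,y) \<in> Rof L" unfolding Rof_def using cls_self by fastforce
qed

lemma Lidx: assumes "good L" "x \<in> X" shows "\<exists>i<length L. L!i = cls x"
  using assms unfolding good_def by (metis imageI in_set_conv_nth)

lemma Luniq: assumes "good L" "i < length L" "j < length L" "L!i = L!j" shows "i = j"
  using assms unfolding good_def by (simp add: nth_eq_iff_index_eq)

lemma ordered: assumes "good L" "x \<in> X" "y \<in> X" "cls x \<noteq> cls y"
  shows "(x,y) \<in> Rof L \<or> (y,x) \<in> Rof L"
proof -
  obtain i where i: "i < length L" "L!i = cls x" using Lidx[OF assms(1,2)] by blast
  obtain j where j: "j < length L" "L!j = cls y" using Lidx[OF assms(1,3)] by blast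
  have "i \<noteq> j" using i j assms(4) by metis
  then consider "i < j" | "j < i" by linarith
  then show ?thesis
  proof cases
    case 1
    then have "(x,y) \<in> Rof L" using memR[OF assms(1)] assms(2,3) i j by blast
    then show ?thesis ..
  next
    case 2
    then have "(y,x) \<in> Rof L" using memR[OF assms(1)] assms(2,3) i j by blast
    then show ?thesis ..
  qed
qed

lemma sameR: assumes "good L" "cls x = cls y" shows "(x,y) \<notin> Rof L"
proof
  assume "(x,y) \<in> Rof L"
  then obtain i j where "i < j" "j < length L" "L!i = cls x" "L!j = cls y" using memR[OF assms(1)] by blast
  then show False using Luniq[OF assms(1), of i j] assms by auto
qed

lemma frownR: assumes "good L"
  shows "frown X (Rof L) = {(x,y). x \<in> X \<and> y \<in> X \<and> x \<noteq> y \<and> cls x = cls y}"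
proof (rule set_eqI, clarify)
  fix x y
  show "(x,y) \<in> frown X (Rof L) \<longleftrightarrow> (x,y) \<in> {(x,y). x \<in> X \<and> y \<in> X \<and> x \<noteq> y \<and> cls x = cls y}"
  proof (cases "x \<in> X \<and> y \<in> X \<and> x \<noteq> y")
    case True
    then show ?thesis using ordered[OF assms, of x y] sameR[OF assms, of x y] sameR[OF assms, of y x]
      unfolding frown_def by auto
  qed (auto simp: frown_def)
qed

lemma stratR: assumes "good L" shows "stratified_order X (Rof L)"
proof -
  note M = memR[OF assms]
  have sub: "Rof L \<subseteq> X \<times> X"
  proof
    fix p assume "p \<in> Rof L"
    moreover obtain x y where "p = (x,y)" by fastforce
    ultimately show "p \<in> X \<times> X" using M by simp
  qed
  have ir: "irrefl (Rof L)" unfolding irrefl_def using sameR[OF assms] by simp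
  have tr: "trans (Rof L)"
  proof (rule transI)
    fix x y z assume xy: "(x,y) \<in> Rof L" and yz: "(y,z) \<in> Rof L"
    from xy obtain i j where ij: "i < j" "j < length L" "L!i = cls x" "L!j = cls y" "x \<in> X"
      using M by auto
    from yz obtain j' k where jk: "j' < k" "k < length L" "L!j' = cls y" "L!k = cls z" "z \<in> X"
      using M by auto
    have "j = j'" using Luniq[OF assms, of j j'] ij jk by simp
    then have "i < k" using ij jk by simp
    then show "(x,z) \<in> Rof L" using M ij jk by blast
  qed
  have eq: "frown X (Rof L) \<union> Id_on X = {(x,y). x \<in> X \<and> y \<in> X \<and> cls x = cls y}"
    using frownR[OF assms] by auto
  have "equiv X {(x,y). x \<in> X \<and> y \<in> X \<and> cls x = cls y}"
    by (rule equivI) (auto simp: refl_on_def sym_def trans_def)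
  then have "equiv X (frown X (Rof L) \<union> Id_on X)" by (simp only: eq)
  then show ?thesis unfolding stratified_order_def partial_order_on_X_def using sub ir tr by blast
qed

lemma hatR: assumes "good L" "x \<in> X" "y \<in> X" "(cls x, cls y) \<in> H" shows "(x,y) \<in> Rof L"
proof -
  have ne: "cls x \<noteq> cls y" using assms hat_iff by auto
  have "(y,x) \<notin> Rof L"
  proof
    assume "(y,x) \<in> Rof L"
    then obtain i j where "i < j" "j < length L" "L!i = cls y" "L!j = cls x" using memR[OF assms(1)] by blast
    moreover have "sorted_wrt (\<lambda>C D. (D,C) \<notin> H) L" using assms(1) unfolding good_def by auto
    ultimately show False using assms(4) by (metis sorted_wrt_nth_less)
  qed
  then show ?thesis using ordered[OF assms(1-3) ne] by auto
qed

lemma extR: assumes "good L" shows "Rof L \<in> ext X prec sq"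
proof -
  have "prec \<subseteq> Rof L"
  proof
    fix p assume p: "p \<in> prec"
    obtain x y where "p = (x,y)" by fastforce
    then show "p \<in> Rof L" using p precX prec_neq S2 hat_iff hatR[OF assms] by blast
  qed
  moreover have "sq \<subseteq> Rof L \<union> frown X (Rof L)"
  proof
    fix p assume p: "p \<in> sq"
    obtain x y where xy: "p = (x,y)" by fastforce
    have X: "x \<in> X" "y \<in> X" using p xy sqX by auto
    show "p \<in> Rof L \<union> frown X (Rof L)"
    proof (cases "cls x = cls y")
      case True
      then show ?thesis using frownR[OF assms] X xy p irr by auto
    next
      case False
      then show ?thesis using hatR[OF assms] hat_iff X xy p by auto
    qed
  qed
  ultimately show ?thesis unfolding ext_def using stratR[OF assms] by auto
qed

lemma stepR: assumes "good L" shows "step_seq X (Rof L) L"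
proof -
  have gL: "set L = cls ` X" "distinct L" using assms unfolding good_def by auto
  have "\<forall>i < length L. L ! i \<noteq> {}"
  proof (intro allI impI)
    fix i assume "i < length L"
    then have "L!i \<in> cls ` X" using gL by (metis nth_mem)
    then obtain c where "c \<in> X" "L!i = cls c" by blast
    then show "L!i \<noteq> {}" using cls_self by auto
  qed
  moreover have "\<forall>i < length L. \<forall>j < length L. i \<noteq> j \<longrightarrow> L ! i \<inter> L ! j = {}"
  proof (intro allI impI)
    fix i j assume ij: "i < length L" "j < length L" "i \<noteq> j"
    then have ne: "L!i \<noteq> L!j" using gL by (simp add: nth_eq_iff_index_eq)
    have "L!i \<in> cls ` X" "L!j \<in> cls ` X" using ij gL by (metis nth_mem)+
    then have "\<And>x. x \<in> L!i \<Longrightarrow> x \<in> L!j \<Longrightarrow> False"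
    proof -
      fix x assume "x \<in> L!i" "x \<in> L!j"
      then have "L!i = cls x" "L!j = cls x" using cls_of_elem(2) \<open>L!i \<in> cls ` X\<close> \<open>L!j \<in> cls ` X\<close> by blast+
      then show False using ne by simp
    qed
    then show "L ! i \<inter> L ! j = {}" by blast
  qed
  moreover have "\<Union>(set L) = X"
  proof
    show "\<Union>(set L) \<subseteq> X" using gL cls_sub by auto
    show "X \<subseteq> \<Union>(set L)" using gL cls_self by auto
  qed
  ultimately show ?thesis unfolding step_seq_def Rof_def by blast
qed

lemma reps: assumes "good L" shows "\<exists>ds. set ds \<subseteq> X \<and> map cls ds = L"
proof -
  have gL: "set L = cls ` X" using assms unfolding good_def by auto
  define ds where "ds = map (\<lambda>C. SOME x. x \<in> C) L"
  have "\<And>C. C \<in> set L \<Longrightarrow> (SOME x. x \<in> C) \<in> X \<and> cls (SOME x. x \<in> C) = C"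
  proof -
    fix C assume "C \<in> set L"
    then obtain c where c: "c \<in> X" "C = cls c" using gL by auto
    then have "(SOME x. x \<in> C) \<in> C" using cls_self by (metis someI)
    then show "(SOME x. x \<in> C) \<in> X \<and> cls (SOME x. x \<in> C) = C" using c cls_of_elem by blast
  qed
  then have "set ds \<subseteq> X" "map cls ds = L" unfolding ds_def by (auto intro: map_idI)
  then show ?thesis by blast
qed


lemma exists_good: "\<exists>L. good L"
  using topo[OF finite_imageI[OF fin] hat_irrefl hat_trans] unfolding good_def by blast

lemma good_cov: assumes "a \<in> X" "b \<in> X" "(cls a, cls b) \<in> cov H"
  shows "\<exists>L1 L2. good (L1 @ [cls a, cls b] @ L2)"
proof -
  define p where "p = cls a"
  define q where "q = cls b"
  have pq: "(p,q) \<in> H" and nz: "\<And>z. (p,z) \<in> H \<Longrightarrow> (z,q) \<in> H \<Longrightarrow> False"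
    using assms(3) unfolding cov_def p_def q_def by auto
  have irH: "\<And>c. (c,c) \<notin> H" using hat_irrefl unfolding irrefl_def by blast
  have trH: "\<And>x y z. (x,y) \<in> H \<Longrightarrow> (y,z) \<in> H \<Longrightarrow> (x,z) \<in> H"
    using hat_trans unfolding trans_def by blast
  have domH: "\<And>x y. (x,y) \<in> H \<Longrightarrow> x \<in> cls ` X" using hat_dom by blast
  have pX: "p \<in> cls ` X" "q \<in> cls ` X" using assms p_def q_def by auto
  define D where "D = {c \<in> cls ` X. (c,q) \<in> H \<and> c \<noteq> p}"
  define U where "U = cls ` X - D - {p,q}"
  have fD: "finite D" "finite U" unfolding D_def U_def using fin by auto
  obtain L1 where L1: "set L1 = D" "distinct L1" "sorted_wrt (\<lambda>x y. (y,x) \<notin> H) L1"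
    using topo[OF fD(1) hat_irrefl hat_trans] by blast
  obtain L2 where L2: "set L2 = U" "distinct L2" "sorted_wrt (\<lambda>x y. (y,x) \<notin> H) L2"
    using topo[OF fD(2) hat_irrefl hat_trans] by blast
  have pq_ne: "p \<noteq> q" using pq irH by auto
  have pD: "p \<notin> D" "q \<notin> D" unfolding D_def using irH by auto
  have setL: "set (L1 @ [p, q] @ L2) = cls ` X" using L1 L2 pX unfolding U_def D_def by auto
  have distL: "distinct (L1 @ [p, q] @ L2)" using L1 L2 pq_ne pD unfolding U_def by auto
  have c1: "\<And>x y. x \<in> D \<Longrightarrow> y \<in> set ([p,q] @ L2) \<Longrightarrow> (y,x) \<notin> H"
  proof
    fix x y assume x: "x \<in> D" and y: "y \<in> set ([p,q] @ L2)" and yx: "(y,x) \<in> H"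
    have xq: "(x,q) \<in> H" using x D_def by auto
    have yq: "(y,q) \<in> H" using trH[OF yx xq] .
    show False
    proof (cases "y = p")
      case True then show False using nz yx xq by blast
    next
      case False
      then have "y \<in> D" using yq domH unfolding D_def by auto
      moreover have "y \<notin> D" using y L2 pD False unfolding U_def by auto
      ultimately show False by blast
    qed
  qed
  have c2: "\<And>y. y \<in> U \<Longrightarrow> (y,p) \<notin> H \<and> (y,q) \<notin> H"
  proof -
    fix y assume y: "y \<in> U"
    have "(y,q) \<notin> H"
    proof
      assume "(y,q) \<in> H"
      then have "y \<in> D \<or> y = p" using domH unfolding D_def by auto
      then show False using y unfolding U_def by auto
    qed
    moreover have "(y,p) \<notin> H" using trH[OF _ pq] calculation by blast
    ultimately show "(y,p) \<notin> H \<and> (y,q) \<notin> H" by blast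
  qed
  have qp: "(q,p) \<notin> H" using trH[OF pq] irH by blast
  have "sorted_wrt (\<lambda>x y. (y,x) \<notin> H) (L1 @ [p, q] @ L2)"
    unfolding sorted_wrt_append using L1 L2 c1 c2 qp
    by (auto dest: c2)
  then have "good (L1 @ [p, q] @ L2)" unfolding good_def using setL distL by simp
  then show ?thesis unfolding p_def q_def by blast
qed

end

theorem mainTheorem2:
  fixes X :: "'a set" and prec sq :: "'a rel"
  assumes "finite X" and "so_structure X prec sq"
  shows "(\<forall>a\<in>X. \<forall>b\<in>X. a \<in> sq_class X sq b \<longleftrightarrow>
            (\<forall>R\<in>ext X prec sq. a = b \<or> (a, b) \<in> frown X R))
       \<and> (\<exists>R\<in>ext X prec sq. \<exists>gs. set gs \<subseteq> X \<and> step_seq X R (map (sq_class X sq) gs))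
       \<and> (\<forall>a\<in>X. \<forall>b\<in>X. (sq_class X sq a, sq_class X sq b) \<in> cov (hat_sq X sq) \<longrightarrow>
            (\<exists>R\<in>ext X prec sq. \<exists>ds. set ds \<subseteq> X \<and> step_seq X R (map (sq_class X sq) ds) \<and>
               (\<exists>i. Suc i < length ds \<and> a \<in> sq_class X sq (ds ! i)
                    \<and> b \<in> sq_class X sq (ds ! Suc i))))"
proof -
  interpret sos X prec sq using assms by unfold_locales
  obtain L0 where L0: "good L0" using exists_good by blast
  have P1: "\<forall>a\<in>X. \<forall>b\<in>X. a \<in> cls b \<longleftrightarrow> (\<forall>R\<in>ext X prec sq. a = b \<or> (a, b) \<in> frown X R)"
  proof (intro ballI iffI)
    fix a b R assume ab: "a \<in> X" "b \<in> X" "a \<in> cls b" and R: "R \<in> ext X prec sq"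
    show "a = b \<or> (a, b) \<in> frown X R"
    proof (cases "a = b")
      case True then show ?thesis by simp
    next
      case False
      then have ne: "a \<noteq> b" .
      then have s: "(a,b) \<in> sq" "(b,a) \<in> sq" using ab unfolding sq_class_def by auto
      have Rp: "irrefl R" "trans R" "sq \<subseteq> R \<union> frown X R"
        using R unfolding ext_def stratified_order_def partial_order_on_X_def by auto
      have "(a,b) \<notin> R"
      proof
        assume "(a,b) \<in> R"
        moreover then have "(b,a) \<in> R" using Rp s unfolding frown_def by auto
        ultimately show False using Rp unfolding irrefl_def trans_def by blast
      qed
      moreover have "(b,a) \<notin> R"
      proof
        assume "(b,a) \<in> R"
        moreover then have "(a,b) \<in> R" using Rp s unfolding frown_def by auto
        ultimately show False using Rp unfolding irrefl_def trans_def by blast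
      qed
      ultimately show ?thesis using ab ne unfolding frown_def by auto
    qed
  next
    fix a b assume ab: "a \<in> X" "b \<in> X" and H: "\<forall>R\<in>ext X prec sq. a = b \<or> (a, b) \<in> frown X R"
    show "a \<in> cls b"
    proof (rule ccontr)
      assume n: "a \<notin> cls b"
      then have "cls a \<noteq> cls b" "a \<noteq> b" using ab cls_self by auto
      then have "(a,b) \<in> Rof L0 \<or> (b,a) \<in> Rof L0" using ordered[OF L0 ab] by blast
      moreover have "a = b \<or> (a,b) \<in> frown X (Rof L0)" using H extR[OF L0] by blast
      ultimately show False using \<open>a \<noteq> b\<close> unfolding frown_def by auto
    qed
  qed
  have P2: "\<exists>R\<in>ext X prec sq. \<exists>gs. set gs \<subseteq> X \<and> step_seq X R (map cls gs)"
    using reps[OF L0] extR[OF L0] stepR[OF L0] by metis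
  have P3: "\<forall>a\<in>X. \<forall>b\<in>X. (cls a, cls b) \<in> cov H \<longrightarrow>
            (\<exists>R\<in>ext X prec sq. \<exists>ds. set ds \<subseteq> X \<and> step_seq X R (map cls ds) \<and>
               (\<exists>i. Suc i < length ds \<and> a \<in> cls (ds ! i) \<and> b \<in> cls (ds ! Suc i)))"
  proof (intro ballI impI)
    fix a b assume ab: "a \<in> X" "b \<in> X" and c: "(cls a, cls b) \<in> cov H"
    obtain L1 L2 where g: "good (L1 @ [cls a, cls b] @ L2)" using good_cov[OF ab c] by blast
    define L where "L = L1 @ [cls a, cls b] @ L2"
    have gL: "good L" using g L_def by simp
    obtain ds where ds: "set ds \<subseteq> X" "map cls ds = L" using reps[OF gL] by blast
    define i where "i = length L1"
    have len: "Suc i < length ds" 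
    proof -
      have "length ds = length L" using ds(2) by (metis length_map)
      then show ?thesis using L_def i_def by simp
    qed
    have "cls (ds ! i) = L ! i" "cls (ds ! Suc i) = L ! Suc i" using ds(2) len
      by (metis Suc_lessD nth_map)+
    moreover have "L ! i = cls a" "L ! Suc i = cls b" unfolding L_def i_def
      by (simp_all add: nth_append)
    ultimately have "a \<in> cls (ds ! i)" "b \<in> cls (ds ! Suc i)" using ab cls_self by auto
    then show "\<exists>R\<in>ext X prec sq. \<exists>ds. set ds \<subseteq> X \<and> step_seq X R (map cls ds) \<and>
               (\<exists>i. Suc i < length ds \<and> a \<in> cls (ds ! i) \<and> b \<in> cls (ds ! Suc i))"
      using extR[OF gL] stepR[OF gL] ds len by metis
  qed
  show ?thesis using P1 P2 P3 by blast
qed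

end
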